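(* For $g=1$, the subspace $B_{(1)}\subset\mathfrak t_{(1)}(2)^{\times 2}$ is one-dimensional, spanned by $V=([t_{12},x^{(1)}],[t_{12},y^{(1)}])$.
   Context: $\mathbb K$ is a field of characteristic zero. For $n\ge1$, $\mathfrak t_{(1)}(n)$ is the Lie algebra generated by $x^{(i)},y^{(i)},t_{ij}$ ($1\le i,j\le n$) with relations: all $t_{ii}$ central; $t_{ij}=t_{ji}$; $[t_{ij},t_{kl}]=0$ for $i,j,k,l$ distinct; $[t_{ik}+t_{kj},t_{ij}]=0$ for $i,j,k$ distinct; $[x^{(i)},x^{(j)}]=[y^{(i)},y^{(j)}]=0$ for $i\ne j$; $[x^{(i)},y^{(j)}]=t_{ij}$ for $i\neq j$; $[x^{(i)},y^{(i)}]=-\sum_{j\neq i}t_{ij}$. For $v\in\mathfrak t_{(1)}(1)$, $v^{12}\in\mathfrak t_{(1)}(2)$ is the image under the Lie morphism with $x^{(1)}\mapsto x^{(1)}+x^{(2)}$, $y^{(1)}\mapsto y^{(1)}+y^{(2)}$, $t_{11}\mapsto t_{11}+t_{22}+t_{12}$. $B_{(1)}$ is the set of pairs $(V_a,V_b)$ for which there is $v\in\mathfrak t_{(1)}(1)$ with $V_a=[v^{12},x^{(1)}]$, $V_b=[v^{12},y^{(1)}]$. *)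

theory Defs
  imports Main
begin

datatype gen = X nat | Y nat | T nat nat

datatype 'k lt = Gen gen | Zero | Add "'k lt" "'k lt" | Smul 'k "'k lt" | Br "'k lt" "'k lt"

definition lsum :: "'k lt list \<Rightarrow> 'k lt" where
  "lsum xs = foldr Add xs Zero"

text \<open>The congruence presenting t_(1)(n): smallest congruence containing the
  K-Lie algebra axioms and the defining relations (indices in {1..n}).\<close>
inductive lie_eqv :: "nat \<Rightarrow> 'k::field lt \<Rightarrow> 'k lt \<Rightarrow> bool" for n :: nat where
  refl: "lie_eqv n a a"
| sym: "lie_eqv n a b \<Longrightarrow> lie_eqv n b a"
| trans: "lie_eqv n a b \<Longrightarrow> lie_eqv n b c \<Longrightarrow> lie_eqv n a c"
| cong_add: "lie_eqv n a a' \<Longrightarrow> lie_eqv n b b' \<Longrightarrow> lie_eqv n (Add a b) (Add a' b')"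
| cong_smul: "lie_eqv n a a' \<Longrightarrow> lie_eqv n (Smul c a) (Smul c a')"
| cong_br: "lie_eqv n a a' \<Longrightarrow> lie_eqv n b b' \<Longrightarrow> lie_eqv n (Br a b) (Br a' b')"
| add_assoc: "lie_eqv n (Add (Add a b) c) (Add a (Add b c))"
| add_comm: "lie_eqv n (Add a b) (Add b a)"
| add_zero: "lie_eqv n (Add a Zero) a"
| add_neg: "lie_eqv n (Add a (Smul (-1) a)) Zero"
| smul_one: "lie_eqv n (Smul 1 a) a"
| smul_smul: "lie_eqv n (Smul c (Smul d a)) (Smul (c * d) a)"
| smul_add: "lie_eqv n (Smul c (Add a b)) (Add (Smul c a) (Smul c b))"
| add_smul: "lie_eqv n (Smul (c + d) a) (Add (Smul c a) (Smul d a))"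
| br_add_left: "lie_eqv n (Br (Add a b) c) (Add (Br a c) (Br b c))"
| br_add_right: "lie_eqv n (Br a (Add b c)) (Add (Br a b) (Br a c))"
| br_smul_left: "lie_eqv n (Br (Smul c a) b) (Smul c (Br a b))"
| br_smul_right: "lie_eqv n (Br a (Smul c b)) (Smul c (Br a b))"
| br_alt: "lie_eqv n (Br a a) Zero"
| jacobi: "lie_eqv n (Add (Br a (Br b c)) (Add (Br b (Br c a)) (Br c (Br a b)))) Zero"
| t_central: "i \<in> {1..n} \<Longrightarrow> lie_eqv n (Br (Gen (T i i)) a) Zero"
| t_sym: "i \<in> {1..n} \<Longrightarrow> j \<in> {1..n} \<Longrightarrow> lie_eqv n (Gen (T i j)) (Gen (T j i))"
| t_comm: "{i, j, k, l} \<subseteq> {1..n} \<Longrightarrow> distinct [i, j, k, l] \<Longrightarrow>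
     lie_eqv n (Br (Gen (T i j)) (Gen (T k l))) Zero"
| t_4T: "{i, j, k} \<subseteq> {1..n} \<Longrightarrow> distinct [i, j, k] \<Longrightarrow>
     lie_eqv n (Br (Add (Gen (T i k)) (Gen (T k j))) (Gen (T i j))) Zero"
| xx: "i \<in> {1..n} \<Longrightarrow> j \<in> {1..n} \<Longrightarrow> i \<noteq> j \<Longrightarrow>
     lie_eqv n (Br (Gen (X i)) (Gen (X j))) Zero"
| yy: "i \<in> {1..n} \<Longrightarrow> j \<in> {1..n} \<Longrightarrow> i \<noteq> j \<Longrightarrow>
     lie_eqv n (Br (Gen (Y i)) (Gen (Y j))) Zero"
| xy: "i \<in> {1..n} \<Longrightarrow> j \<in> {1..n} \<Longrightarrow> i \<noteq> j \<Longrightarrow>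
     lie_eqv n (Br (Gen (X i)) (Gen (Y j))) (Gen (T i j))"
| xy_diag: "i \<in> {1..n} \<Longrightarrow>
     lie_eqv n (Br (Gen (X i)) (Gen (Y i)))
       (Smul (-1) (lsum (map (\<lambda>j. Gen (T i j)) (filter (\<lambda>j. j \<noteq> i) [1..<n+1]))))"

text \<open>Element of t_(1)(n) represented by a term: its equivalence class.\<close>
definition cls :: "nat \<Rightarrow> 'k::field lt \<Rightarrow> 'k lt set" where
  "cls n t = {s. lie_eqv n s t}"

fun gen_ok :: "nat \<Rightarrow> gen \<Rightarrow> bool" where
  "gen_ok n (X i) = (i \<in> {1..n})"
| "gen_ok n (Y i) = (i \<in> {1..n})"
| "gen_ok n (T i j) = (i \<in> {1..n} \<and> j \<in> {1..n})"

fun wf :: "nat \<Rightarrow> 'k lt \<Rightarrow> bool" where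
  "wf n (Gen g) = gen_ok n g"
| "wf n Zero = True"
| "wf n (Add a b) = (wf n a \<and> wf n b)"
| "wf n (Smul c a) = wf n a"
| "wf n (Br a b) = (wf n a \<and> wf n b)"

text \<open>The map v \<mapsto> v^{12}, on representatives (generators of t_(1)(1)).\<close>
fun phi12 :: "'k lt \<Rightarrow> 'k lt" where
  "phi12 (Gen (X i)) = (if i = 1 then Add (Gen (X 1)) (Gen (X 2)) else Gen (X i))"
| "phi12 (Gen (Y i)) = (if i = 1 then Add (Gen (Y 1)) (Gen (Y 2)) else Gen (Y i))"
| "phi12 (Gen (T i j)) = (if i = 1 \<and> j = 1
      then Add (Add (Gen (T 1 1)) (Gen (T 2 2))) (Gen (T 1 2)) else Gen (T i j))"
| "phi12 Zero = Zero"
| "phi12 (Add a b) = Add (phi12 a) (phi12 b)"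
| "phi12 (Smul c a) = Smul c (phi12 a)"
| "phi12 (Br a b) = Br (phi12 a) (phi12 b)"

definition B1 :: "('k::field lt set \<times> 'k lt set) set" where
  "B1 = {(cls 2 (Br (phi12 v) (Gen (X 1))), cls 2 (Br (phi12 v) (Gen (Y 1)))) | v. wf 1 v}"

end

theory Submission
  imports Defs
begin

declare One_nat_def[simp del]

lemma lie_equivp: "equivp (lie_eqv n)"
  by (rule equivpI; rule reflpI sympI transpI) (auto intro: lie_eqv.intros)

quotient_type (overloaded) 'k T2 = "'k::field lt" / "lie_eqv 2"
  morphisms rep_T2 abs_T2
  by (rule lie_equivp)

instantiation T2 :: (field) ab_group_add
begin
lift_definition zero_T2 :: "'a T2" is Zero .
lift_definition plus_T2 :: "'a T2 \<Rightarrow> 'a T2 \<Rightarrow> 'a T2" is Add by (rule lie_eqv.cong_add)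
lift_definition uminus_T2 :: "'a T2 \<Rightarrow> 'a T2" is "\<lambda>a. Smul (-1) a" by (rule lie_eqv.cong_smul)
lift_definition minus_T2 :: "'a T2 \<Rightarrow> 'a T2 \<Rightarrow> 'a T2" is "\<lambda>a b. Add a (Smul (-1) b)"
  by (intro lie_eqv.cong_add lie_eqv.cong_smul)
instance proof
  fix a b c :: "'a T2"
  show "a + b + c = a + (b + c)" by transfer (rule lie_eqv.add_assoc)
  show "a + b = b + a" by transfer (rule lie_eqv.add_comm)
  show "0 + a = a" by transfer (meson lie_eqv.add_comm lie_eqv.add_zero lie_eqv.trans)
  show "- a + a = 0" by transfer (meson lie_eqv.add_comm lie_eqv.add_neg lie_eqv.trans)
  show "a - b = a + - b" by transfer (rule lie_eqv.refl)
qed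
end

lift_definition sm :: "'k::field \<Rightarrow> 'k T2 \<Rightarrow> 'k T2" is Smul by (rule lie_eqv.cong_smul)
lift_definition br :: "'k::field T2 \<Rightarrow> 'k T2 \<Rightarrow> 'k T2" is Br by (rule lie_eqv.cong_br)
lift_definition gn :: "gen \<Rightarrow> 'k::field T2" is Gen .

lemma sm_add_r: "sm c (a + b) = sm c a + sm c b" by transfer (rule lie_eqv.smul_add)
lemma sm_add_l: "sm (c + d) a = sm c a + sm d a" by transfer (rule lie_eqv.add_smul)
lemma sm_sm: "sm c (sm d a) = sm (c * d) a" by transfer (rule lie_eqv.smul_smul)
lemma sm_one: "sm 1 a = a" by transfer (rule lie_eqv.smul_one)
lemma sm_zero_l: "sm 0 a = 0"
proof -
  have "sm 0 a = sm 0 a + sm 0 a" using sm_add_l[of 0 0 a] by simp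
  then show ?thesis by simp
qed
lemma sm_zero_r: "sm c 0 = 0"
  by (metis sm_sm sm_zero_l mult_zero_right)
lemma sm_minus: "- a = sm (-1) a" by transfer (rule lie_eqv.refl)
lemma sm_neg_r: "sm c (- a) = - sm c a" by (simp add: sm_minus sm_sm)

lemma br_add_l: "br (a + b) c = br a c + br b c" by transfer (rule lie_eqv.br_add_left)
lemma br_add_r: "br a (b + c) = br a b + br a c" by transfer (rule lie_eqv.br_add_right)
lemma br_sm_l: "br (sm c a) b = sm c (br a b)" by transfer (rule lie_eqv.br_smul_left)
lemma br_sm_r: "br a (sm c b) = sm c (br a b)" by transfer (rule lie_eqv.br_smul_right)
lemma br_alt: "br a a = 0" by transfer (rule lie_eqv.br_alt)
lemma br_jac: "br a (br b c) + (br b (br c a) + br c (br a b)) = 0" by transfer (rule lie_eqv.jacobi)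
lemma br_zero_l: "br 0 a = 0" by (metis br_sm_l sm_zero_l)
lemma br_zero_r: "br a 0 = 0" by (metis br_sm_r sm_zero_l)
lemma br_neg_l: "br (- a) b = - br a b" by (simp add: sm_minus br_sm_l)
lemma br_neg_r: "br a (- b) = - br a b" by (simp add: sm_minus br_sm_r)
lemma br_anti: "br a b = - br b a"
proof -
  have "br (a + b) (a + b) = br a a + br a b + (br b a + br b b)"
    by (simp only: br_add_l br_add_r add_ac)
  then have "br a b + br b a = 0" by (simp add: br_alt)
  then show ?thesis by (simp add: eq_neg_iff_add_eq_0)
qed
lemma br_jac2: "br (br a b) c = br a (br b c) - br b (br a c)"
proof -
  have 1: "br (br a b) c = - br c (br a b)" by (metis br_anti)
  have 2: "br b (br c a) = - br b (br a c)" by (metis br_anti br_neg_r)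
  have 3: "- br c (br a b) = br a (br b c) + br b (br c a)"
    using br_jac[of a b c] by (metis add.assoc add.commute neg_eq_iff_add_eq_0)
  show ?thesis using 1 2 3 by simp
qed

lemmas brs = br_add_l br_add_r br_sm_l br_sm_r br_alt br_zero_l br_zero_r br_neg_l br_neg_r
  sm_add_r sm_add_l sm_sm sm_one sm_zero_l sm_zero_r sm_neg_r

lemma T11c: "br (gn (T 1 1)) a = 0" by transfer (rule lie_eqv.t_central, simp)
lemma T22c: "br (gn (T 2 2)) a = 0" by transfer (rule lie_eqv.t_central, simp)
lemma T21: "gn (T 2 1) = gn (T 1 2)" by transfer (rule lie_eqv.t_sym, auto)
lemma X12: "br (gn (X 1)) (gn (X 2)) = 0" by transfer (rule lie_eqv.xx, auto)
lemma Y12: "br (gn (Y 1)) (gn (Y 2)) = 0" by transfer (rule lie_eqv.yy, auto)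
lemma X1Y2: "br (gn (X 1)) (gn (Y 2)) = gn (T 1 2)" by transfer (rule lie_eqv.xy, auto)
lemma X2Y1: "br (gn (X 2)) (gn (Y 1)) = gn (T 1 2)"
  by transfer (rule lie_eqv.trans, rule lie_eqv.xy, auto intro: lie_eqv.t_sym)

lemma lsum1: "lsum (map (\<lambda>j. Gen (T 1 j)) (filter (\<lambda>j. j \<noteq> 1) [1..<2+1])) = Add (Gen (T 1 2)) Zero"
  by (simp add: lsum_def upt_rec)
lemma lsum2: "lsum (map (\<lambda>j. Gen (T 2 j)) (filter (\<lambda>j. j \<noteq> 2) [1..<2+1])) = Add (Gen (T 2 1)) Zero"
  by (simp add: lsum_def upt_rec)

lemma X1Y1: "br (gn (X 1)) (gn (Y 1)) = - gn (T 1 2)"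
proof -
  have "br (gn (X 1)) (gn (Y 1)) = sm (-1) (gn (T 1 2) + 0)"
    by transfer (rule lie_eqv.xy_diag[where n=2 and i=1, unfolded lsum1], simp)
  then show ?thesis by (simp add: sm_minus)
qed
lemma X2Y2: "br (gn (X 2)) (gn (Y 2)) = - gn (T 1 2)"
proof -
  have "br (gn (X 2)) (gn (Y 2)) = sm (-1) (gn (T 2 1) + 0)"
    by transfer (rule lie_eqv.xy_diag[where n=2 and i=2, unfolded lsum2], simp)
  then show ?thesis unfolding T21 by (simp add: sm_minus)
qed

lemma X2X1: "br (gn (X 2)) (gn (X 1)) = 0" by (metis X12 br_anti neg_0_equal_iff_equal)
lemma Y2Y1: "br (gn (Y 2)) (gn (Y 1)) = 0" by (metis Y12 br_anti neg_0_equal_iff_equal)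
lemma Y1X1: "br (gn (Y 1)) (gn (X 1)) = gn (T 1 2)" by (metis X1Y1 br_anti minus_minus)
lemma Y2X2: "br (gn (Y 2)) (gn (X 2)) = gn (T 1 2)" by (metis X2Y2 br_anti minus_minus)
lemma Y2X1: "br (gn (Y 2)) (gn (X 1)) = - gn (T 1 2)" by (metis X1Y2 br_anti)
lemma Y1X2: "br (gn (Y 1)) (gn (X 2)) = - gn (T 1 2)" by (metis X2Y1 br_anti)

lemmas tab = X12 Y12 X1Y2 X2Y1 X1Y1 X2Y2 X2X1 Y2Y1 Y1X1 Y2X2 Y2X1 Y1X2 T11c T22c

definition E1 :: "'k::field T2" where "E1 = gn (X 1) + gn (X 2)"
definition E2 :: "'k::field T2" where "E2 = gn (Y 1) + gn (Y 2)"
definition E3 :: "'k::field T2" where "E3 = gn (T 1 1) + gn (T 2 2) + gn (T 1 2)"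


lemma T12_E1: "br (gn (T 1 2)) E1 = 0"
proof -
  have "br (gn (T 1 2)) E1 = br (br (gn (X 1)) (gn (Y 2))) E1" by (simp add: X1Y2)
  also have "\<dots> = br (gn (X 1)) (br (gn (Y 2)) E1) - br (gn (Y 2)) (br (gn (X 1)) E1)" by (rule br_jac2)
  also have "\<dots> = 0" by (simp add: E1_def brs tab)
  finally show ?thesis .
qed
lemma T12_E2: "br (gn (T 1 2)) E2 = 0"
proof -
  have "br (gn (T 1 2)) E2 = br (br (gn (X 1)) (gn (Y 2))) E2" by (simp add: X1Y2)
  also have "\<dots> = br (gn (X 1)) (br (gn (Y 2)) E2) - br (gn (Y 2)) (br (gn (X 1)) E2)" by (rule br_jac2)
  also have "\<dots> = 0" by (simp add: E2_def brs tab)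
  finally show ?thesis .
qed
lemma E1_T12: "br E1 (gn (T 1 2)) = 0" by (metis T12_E1 br_anti neg_0_equal_iff_equal)
lemma E2_T12: "br E2 (gn (T 1 2)) = 0" by (metis T12_E2 br_anti neg_0_equal_iff_equal)
lemma E3_E1: "br E3 E1 = 0" by (simp add: E3_def brs tab T12_E1)
lemma E3_E2: "br E3 E2 = 0" by (simp add: E3_def brs tab T12_E2)
lemma E1_E3: "br E1 E3 = 0" by (metis E3_E1 br_anti neg_0_equal_iff_equal)
lemma E2_E3: "br E2 E3 = 0" by (metis E3_E2 br_anti neg_0_equal_iff_equal)
lemma E1_E2: "br E1 E2 = 0" by (simp add: E1_def E2_def brs tab)
lemma E2_E1: "br E2 E1 = 0" by (metis E1_E2 br_anti neg_0_equal_iff_equal)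
lemma E1_X1: "br E1 (gn (X 1)) = 0" by (simp add: E1_def brs tab)
lemma E2_X1: "br E2 (gn (X 1)) = 0" by (simp add: E2_def brs tab)
lemma E3_X1: "br E3 (gn (X 1)) = br (gn (T 1 2)) (gn (X 1))" by (simp add: E3_def brs tab)
lemma E1_Y1: "br E1 (gn (Y 1)) = 0" by (simp add: E1_def brs tab)
lemma E2_Y1: "br E2 (gn (Y 1)) = 0" by (simp add: E2_def brs tab)
lemma E3_Y1: "br E3 (gn (Y 1)) = br (gn (T 1 2)) (gn (Y 1))" by (simp add: E3_def brs tab)

lemmas Etab = E3_E1 E3_E2 E1_E3 E2_E3 E1_E2 E2_E1 br_alt


lemma abs_Add: "abs_T2 (Add a b) = abs_T2 a + abs_T2 b" by (metis plus_T2.abs_eq)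
lemma abs_Smul: "abs_T2 (Smul c a) = sm c (abs_T2 a)" by (metis sm.abs_eq)
lemma abs_Br: "abs_T2 (Br a b) = br (abs_T2 a) (abs_T2 b)" by (metis br.abs_eq)
lemma abs_Gen: "abs_T2 (Gen x) = gn x" by (metis gn.abs_eq)
lemma abs_Zero: "abs_T2 Zero = 0" by (metis zero_T2.abs_eq)
lemmas abss = abs_Add abs_Smul abs_Br abs_Gen abs_Zero

lemma inv12: "wf 1 v \<Longrightarrow> \<exists>a b c. abs_T2 (phi12 v) = sm a E1 + sm b E2 + sm c E3"
proof (induction v)
  case (Gen x)
  then show ?case
  proof (cases x)
    case (X i)
    then have "i = 1" using Gen by simp
    then show ?thesis using X by (intro exI[of _ 1] exI[of _ 0]) (simp add: abss brs E1_def)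
  next
    case (Y i)
    then have "i = 1" using Gen by simp
    then show ?thesis using Y by (intro exI[of _ 0] exI[of _ 1]) (simp add: abss brs E2_def)
  next
    case (T i j)
    then have "i = 1" "j = 1" using Gen by auto
    then show ?thesis using T by (intro exI[of _ 0] exI[of _ 1]) (simp add: abss brs E3_def)
  qed
next
  case Zero
  then show ?case by (intro exI[of _ 0]) (simp add: abss brs)
next
  case (Add v w)
  then obtain a b c a' b' c' where "abs_T2 (phi12 v) = sm a E1 + sm b E2 + sm c E3"
    "abs_T2 (phi12 w) = sm a' E1 + sm b' E2 + sm c' E3" by auto
  then show ?case by (intro exI[of _ "a + a'"] exI[of _ "b + b'"] exI[of _ "c + c'"])
    (simp add: abss brs add_ac)
next
  case (Smul k v)
  then obtain a b c where "abs_T2 (phi12 v) = sm a E1 + sm b E2 + sm c E3" by auto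
  then show ?case by (intro exI[of _ "k * a"] exI[of _ "k * b"] exI[of _ "k * c"])
    (simp add: abss brs)
next
  case (Br v w)
  then obtain a b c a' b' c' where "abs_T2 (phi12 v) = sm a E1 + sm b E2 + sm c E3"
    "abs_T2 (phi12 w) = sm a' E1 + sm b' E2 + sm c' E3" by auto
  then show ?case by (intro exI[of _ 0]) (simp add: abss brs Etab)
qed

lemma main12: "wf 1 v \<Longrightarrow> \<exists>c. abs_T2 (Br (phi12 v) (Gen (X 1))) = sm c (br (gn (T 1 2)) (gn (X 1)))
   \<and> abs_T2 (Br (phi12 v) (Gen (Y 1))) = sm c (br (gn (T 1 2)) (gn (Y 1)))"
proof -
  assume "wf 1 v"
  then obtain a b c where h: "abs_T2 (phi12 v) = sm a E1 + sm b E2 + sm c E3" using inv12 by blast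
  show ?thesis
    by (rule exI[of _ c]) (simp add: h abss brs E1_X1 E2_X1 E3_X1 E1_Y1 E2_Y1 E3_Y1)
qed

lemma cls_eq: "cls 2 a = cls 2 b \<longleftrightarrow> abs_T2 a = abs_T2 b"
proof -
  have "cls 2 a = cls 2 b \<longleftrightarrow> lie_eqv 2 a b"
    unfolding cls_def by (auto intro: lie_eqv.intros)
  then show ?thesis by (simp add: T2.abs_eq_iff)
qed


datatype 'k m2 = M 'k 'k 'k 'k

fun madd :: "'k::field m2 \<Rightarrow> 'k m2 \<Rightarrow> 'k m2" where
  "madd (M a b c d) (M a' b' c' d') = M (a + a') (b + b') (c + c') (d + d')"
fun msc :: "'k::field \<Rightarrow> 'k m2 \<Rightarrow> 'k m2" where
  "msc k (M a b c d) = M (k * a) (k * b) (k * c) (k * d)"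
fun mmul :: "'k::field m2 \<Rightarrow> 'k m2 \<Rightarrow> 'k m2" where
  "mmul (M a b c d) (M a' b' c' d') = M (a * a' + b * c') (a * b' + b * d') (c * a' + d * c') (c * b' + d * d')"
definition mbr :: "'k::field m2 \<Rightarrow> 'k m2 \<Rightarrow> 'k m2" where
  "mbr x y = madd (mmul x y) (msc (-1) (mmul y x))"

definition me :: "'k::field m2" where "me = M 0 1 0 0"
definition mf :: "'k::field m2" where "mf = M 0 0 1 0"
definition mh :: "'k::field m2" where "mh = M 1 0 0 (-1)"

fun ev :: "'k::field lt \<Rightarrow> 'k m2" where
  "ev (Gen (X i)) = (if i = 1 then me else if i = 2 then msc (-1) me else M 0 0 0 0)"
| "ev (Gen (Y i)) = (if i = 1 then mf else if i = 2 then msc (-1) mf else M 0 0 0 0)"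
| "ev (Gen (T i j)) = (if (i = 1 \<and> j = 2) \<or> (i = 2 \<and> j = 1) then msc (-1) mh else M 0 0 0 0)"
| "ev Zero = M 0 0 0 0"
| "ev (Add a b) = madd (ev a) (ev b)"
| "ev (Smul c a) = msc c (ev a)"
| "ev (Br a b) = mbr (ev a) (ev b)"

lemma lsum1': "lsum (map (\<lambda>j. Gen (T 1 j)) (filter (\<lambda>j. j \<noteq> 1) [1..<3])) = Add (Gen (T 1 2)) Zero"
  by (simp add: lsum_def upt_rec)
lemma lsum2': "lsum (map (\<lambda>j. Gen (T 2 j)) (filter (\<lambda>j. j \<noteq> 2) [1..<3])) = Add (Gen (T 2 1)) Zero"
  by (simp add: lsum_def upt_rec)

lemma in12: "i \<in> {1..2::nat} \<longleftrightarrow> i = 1 \<or> i = 2" by auto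

lemma ev_sound: "lie_eqv 2 a b \<Longrightarrow> ev a = ev b"
proof (induction rule: lie_eqv.induct)
  case (add_assoc a b c) show ?case by (cases "ev a"; cases "ev b"; cases "ev c") (simp add: algebra_simps)
next
  case (add_comm a b) show ?case by (cases "ev a"; cases "ev b") (simp add: algebra_simps)
next
  case (add_zero a) show ?case by (cases "ev a") simp
next
  case (add_neg a) show ?case by (cases "ev a") simp
next
  case (smul_one a) show ?case by (cases "ev a") simp
next
  case (smul_smul c d a) show ?case by (cases "ev a") (simp add: algebra_simps)
next
  case (smul_add c a b) show ?case by (cases "ev a"; cases "ev b") (simp add: algebra_simps)
next
  case (add_smul c d a) show ?case by (cases "ev a") (simp add: algebra_simps)
next
  case (br_add_left a b c) show ?case by (cases "ev a"; cases "ev b"; cases "ev c") (simp add: mbr_def algebra_simps)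
next
  case (br_add_right a b c) show ?case by (cases "ev a"; cases "ev b"; cases "ev c") (simp add: mbr_def algebra_simps)
next
  case (br_smul_left c a b) show ?case by (cases "ev a"; cases "ev b") (simp add: mbr_def algebra_simps)
next
  case (br_smul_right a c b) show ?case by (cases "ev a"; cases "ev b") (simp add: mbr_def algebra_simps)
next
  case (br_alt a) show ?case by (cases "ev a") (simp add: mbr_def algebra_simps)
next
  case (jacobi a b c) show ?case by (cases "ev a"; cases "ev b"; cases "ev c") (simp add: mbr_def algebra_simps)
next
  case (t_central i a) then show ?case by (cases "ev a") (auto simp: mbr_def)
next
  case (t_sym i j) then show ?case by auto
next
  case (t_comm i j k l) then show ?case by auto
next
  case (t_4T i j k) then show ?case by auto
next
  case (xx i j) then show ?case by (auto simp: in12 mbr_def me_def)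
next
  case (yy i j) then show ?case by (auto simp: in12 mbr_def mf_def)
next
  case (xy i j) then show ?case by (auto simp: in12 mbr_def me_def mf_def mh_def)
next
  case (xy_diag i)
  then have "i = 1 \<or> i = 2" using in12 by blast
  then show ?case
    by (elim disjE) (simp_all add: mbr_def me_def mf_def mh_def lsum1' lsum2')
qed auto


theorem lemma11p7:
  defines "Va \<equiv> Br (Gen (T 1 2)) (Gen (X 1)) :: 'k::field_char_0 lt"
      and "Vb \<equiv> Br (Gen (T 1 2)) (Gen (Y 1)) :: 'k lt"
  shows "(B1 :: ('k lt set \<times> 'k lt set) set) = {(cls 2 (Smul c Va), cls 2 (Smul c Vb)) | c. True}
         \<and> (cls 2 Va, cls 2 Vb) \<noteq> (cls 2 Zero, cls 2 Zero)"
proof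
  have aVa: "abs_T2 (Smul c Va) = sm c (br (gn (T 1 2)) (gn (X 1)))" for c by (simp add: Va_def abss)
  have aVb: "abs_T2 (Smul c Vb) = sm c (br (gn (T 1 2)) (gn (Y 1)))" for c by (simp add: Vb_def abss)
  show "(B1 :: ('k lt set \<times> 'k lt set) set) = {(cls 2 (Smul c Va), cls 2 (Smul c Vb)) | c. True}"
  proof (rule set_eqI)
    fix p :: "'k lt set \<times> 'k lt set"
    show "p \<in> B1 \<longleftrightarrow> p \<in> {(cls 2 (Smul c Va), cls 2 (Smul c Vb)) | c. True}"
    proof
      assume "p \<in> B1"
      then obtain v :: "'k lt" where p: "p = (cls 2 (Br (phi12 v) (Gen (X 1))), cls 2 (Br (phi12 v) (Gen (Y 1))))"
        and w: "wf 1 v" unfolding B1_def by blast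
      obtain c where "abs_T2 (Br (phi12 v) (Gen (X 1))) = sm c (br (gn (T 1 2)) (gn (X 1)))"
        "abs_T2 (Br (phi12 v) (Gen (Y 1))) = sm c (br (gn (T 1 2)) (gn (Y 1)))"
        using main12[OF w] by blast
      then have "p = (cls 2 (Smul c Va), cls 2 (Smul c Vb))" by (simp add: p cls_eq aVa aVb)
      then show "p \<in> {(cls 2 (Smul c Va), cls 2 (Smul c Vb)) | c. True}" by blast
    next
      assume "p \<in> {(cls 2 (Smul c Va), cls 2 (Smul c Vb)) | c. True}"
      then obtain c where p: "p = (cls 2 (Smul c Va), cls 2 (Smul c Vb))" by blast
      define v :: "'k lt" where "v = Smul c (Gen (T 1 1))"
      have w: "wf 1 v" unfolding v_def by simp
      have "cls 2 (Br (phi12 v) (Gen (X 1))) = cls 2 (Smul c Va)"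
        unfolding cls_eq aVa v_def by (simp add: abss brs tab)
      moreover have "cls 2 (Br (phi12 v) (Gen (Y 1))) = cls 2 (Smul c Vb)"
        unfolding cls_eq aVb v_def by (simp add: abss brs tab)
      ultimately show "p \<in> B1" unfolding B1_def p using w by blast
    qed
  qed
  show "(cls 2 Va, cls 2 Vb) \<noteq> (cls 2 Zero, cls 2 Zero)"
  proof
    assume "(cls 2 Va, cls 2 Vb) = (cls 2 Zero, cls 2 Zero)"
    then have "abs_T2 Va = abs_T2 Zero" using cls_eq by blast
    then have "lie_eqv 2 Va Zero" by (simp add: T2.abs_eq_iff)
    then have "ev Va = ev Zero" by (rule ev_sound)
    then show False by (simp add: Va_def mbr_def me_def mh_def)
  qed
qed

end
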